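(* Let $H$ be a bigraph. If the pair-digraph $H^+$ has a self-coupled strong component, then $H$ is not an interval bigraph; equivalently, $V(H)$ admits no linear ordering $<$ without three vertices $a<b<c$ such that $a,b$ have the same colour, $c$ has the opposite colour, $ac\in E(H)$ and $bc\notin E(H)$.
   Context: A bigraph is a bipartite graph $H$ with a fixed bipartition $V(H)=B\cup W$ (black and white vertices). $H$ is an interval bigraph if there are intervals $I_v$, $v\in V(H)$, such that for $x\in B$, $y\in W$: $xy\in E(H)$ iff $I_x\cap I_y\neq\emptyset$. By a theorem of Hell and Huang, $H$ is an interval bigraph iff $V(H)$ has a linear ordering $<$ with no $a<b<c$ where $a,b$ have the same colour, $c$ the opposite colour, $ac\in E(H)$, $bc\notin E(H)$. The pair-digraph $H^+$ has vertices all ordered pairs $(u,v)$, $u\ne v$, and arcs $(u,v)\to(u',v)$ whenever $u,v$ have the same colour, $uu'\in E(H)$, $vu'\notin E(H)$, and $(u,v)\to(u,v')$ whenever $u,v$ have different colours, $vv'\in E(H)$, $uv\notin E(H)$. For a set $S$ of vertices of $H^+$, $S'=\{(u,v):(v,u)\in S\}$. A strong component $S$ of $H^+$ is self-coupled if $S=S'$. *)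

theory Defs
  imports Complex_Main
begin

definition bigraph :: "'a set \<Rightarrow> 'a set \<Rightarrow> ('a \<times> 'a) set \<Rightarrow> bool" where
  "bigraph V B E \<longleftrightarrow> finite V \<and> B \<subseteq> V \<and> sym E \<and>
     E \<subseteq> {(x, y). x \<in> V \<and> y \<in> V \<and> (x \<in> B \<longleftrightarrow> y \<notin> B)}"

definition same_colour :: "'a set \<Rightarrow> 'a \<Rightarrow> 'a \<Rightarrow> bool" where
  "same_colour B u v \<longleftrightarrow> (u \<in> B \<longleftrightarrow> v \<in> B)"

definition interval_bigraph :: "'a set \<Rightarrow> 'a set \<Rightarrow> ('a \<times> 'a) set \<Rightarrow> bool" where
  "interval_bigraph V B E \<longleftrightarrow>
     (\<exists>I :: 'a \<Rightarrow> real \<times> real. (\<forall>v\<in>V. fst (I v) \<le> snd (I v)) \<and>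
        (\<forall>x\<in>B. \<forall>y\<in>V - B. (x, y) \<in> E \<longleftrightarrow> {fst (I x)..snd (I x)} \<inter> {fst (I y)..snd (I y)} \<noteq> {}))"

definition good_ordering :: "'a set \<Rightarrow> 'a set \<Rightarrow> ('a \<times> 'a) set \<Rightarrow> ('a \<times> 'a) set \<Rightarrow> bool" where
  "good_ordering V B E r \<longleftrightarrow> r \<subseteq> V \<times> V \<and> strict_linear_order_on V r \<and>
     \<not> (\<exists>a\<in>V. \<exists>b\<in>V. \<exists>c\<in>V. (a, b) \<in> r \<and> (b, c) \<in> r \<and> same_colour B a b \<and>
          \<not> same_colour B a c \<and> (a, c) \<in> E \<and> (b, c) \<notin> E)"

definition pair_vertices :: "'a set \<Rightarrow> ('a \<times> 'a) set" where
  "pair_vertices V = {(u, v). u \<in> V \<and> v \<in> V \<and> u \<noteq> v}"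

definition pair_arcs :: "'a set \<Rightarrow> 'a set \<Rightarrow> ('a \<times> 'a) set \<Rightarrow> (('a \<times> 'a) \<times> ('a \<times> 'a)) set" where
  "pair_arcs V B E =
     {((u, v), (u', v)) | u v u'. (u, v) \<in> pair_vertices V \<and> (u', v) \<in> pair_vertices V \<and>
         same_colour B u v \<and> (u, u') \<in> E \<and> (v, u') \<notin> E}
   \<union> {((u, v), (u, v')) | u v v'. (u, v) \<in> pair_vertices V \<and> (u, v') \<in> pair_vertices V \<and>
         \<not> same_colour B u v \<and> (v, v') \<in> E \<and> (u, v') \<notin> E}"

definition strong_component :: "'b set \<Rightarrow> ('b \<times> 'b) set \<Rightarrow> 'b set \<Rightarrow> bool" where
  "strong_component N A S \<longleftrightarrow> S \<noteq> {} \<and> S \<subseteq> N \<and>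
     (\<forall>x\<in>S. \<forall>y\<in>S. (x, y) \<in> A\<^sup>*) \<and>
     (\<forall>x\<in>S. \<forall>y\<in>N. (x, y) \<in> A\<^sup>* \<and> (y, x) \<in> A\<^sup>* \<longrightarrow> y \<in> S)"

definition swap_set :: "('a \<times> 'a) set \<Rightarrow> ('a \<times> 'a) set" where
  "swap_set S = {(u, v). (v, u) \<in> S}"

definition self_coupled :: "('a \<times> 'a) set \<Rightarrow> bool" where
  "self_coupled S \<longleftrightarrow> S = swap_set S"

end

theory Submission
  imports Defs
begin

lemma arc_cases:
  assumes "((u0,v0),(u1,v1)) \<in> pair_arcs V B E"
  shows "(v1 = v0 \<and> u0 \<in> V \<and> v0 \<in> V \<and> u1 \<in> V \<and> u0 \<noteq> v0 \<and> u1 \<noteq> v0 \<and>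
           same_colour B u0 v0 \<and> (u0,u1) \<in> E \<and> (v0,u1) \<notin> E)
       \<or> (u1 = u0 \<and> u0 \<in> V \<and> v0 \<in> V \<and> v1 \<in> V \<and> u0 \<noteq> v0 \<and> u0 \<noteq> v1 \<and>
           \<not> same_colour B u0 v0 \<and> (v0,v1) \<in> E \<and> (u0,v1) \<notin> E)"
  using assms unfolding pair_arcs_def pair_vertices_def by blast

lemma edge_colour:
  assumes "bigraph V B E" "(x,y) \<in> E"
  shows "x \<in> V \<and> y \<in> V \<and> \<not> same_colour B x y"
  using assms unfolding bigraph_def same_colour_def by blast

lemma arc_target_nonedge:
  assumes bg: "bigraph V B E" and a: "(p,(u1,v1)) \<in> pair_arcs V B E"
  shows "(u1,v1) \<notin> E"
proof -
  obtain u0 v0 where p: "p = (u0,v0)" by (cases p)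
  from arc_cases[OF a[unfolded p]] show ?thesis
  proof
    assume h: "v1 = v0 \<and> u0 \<in> V \<and> v0 \<in> V \<and> u1 \<in> V \<and> u0 \<noteq> v0 \<and> u1 \<noteq> v0 \<and>
           same_colour B u0 v0 \<and> (u0,u1) \<in> E \<and> (v0,u1) \<notin> E"
    have "sym E" using bg unfolding bigraph_def by blast
    then show ?thesis using h by (auto dest: symD)
  next
    assume h: "u1 = u0 \<and> u0 \<in> V \<and> v0 \<in> V \<and> v1 \<in> V \<and> u0 \<noteq> v0 \<and> u0 \<noteq> v1 \<and>
           \<not> same_colour B u0 v0 \<and> (v0,v1) \<in> E \<and> (u0,v1) \<notin> E"
    then show ?thesis by blast
  qed
qed

lemma closed_rtrancl:
  assumes "(x,y) \<in> A\<^sup>*" "x \<in> P" "\<And>a b. (a,b) \<in> A \<Longrightarrow> a \<in> P \<Longrightarrow> b \<in> P"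
  shows "y \<in> P"
  using assms(1,2) by (induction rule: rtrancl_induct) (auto intro: assms(3))

lemma general:
  assumes bg: "bigraph V B E"
    and cl: "\<And>a b. (a,b) \<in> pair_arcs V B E \<Longrightarrow> a \<in> P \<Longrightarrow> b \<in> P"
    and tot: "\<And>u v. u \<in> V \<Longrightarrow> v \<in> V \<Longrightarrow> u \<noteq> v \<Longrightarrow> (u,v) \<notin> E \<Longrightarrow> (u,v) \<in> P \<or> (v,u) \<in> P"
    and asy: "\<And>u v. (u,v) \<in> P \<Longrightarrow> (v,u) \<notin> P"
    and sc: "strong_component (pair_vertices V) (pair_arcs V B E) S" "self_coupled S"
  shows False
proof -
  from sc(1) obtain x where xS: "x \<in> S" unfolding strong_component_def by blast
  obtain a b where x: "x = (a,b)" by (cases x)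
  have "(b,a) \<in> S" using sc(2) xS x unfolding self_coupled_def swap_set_def by blast
  with xS x sc(1) have r1: "((a,b),(b,a)) \<in> (pair_arcs V B E)\<^sup>*"
    and r2: "((b,a),(a,b)) \<in> (pair_arcs V B E)\<^sup>*"
    and ab: "a \<in> V" "b \<in> V" "a \<noteq> b"
    unfolding strong_component_def pair_vertices_def by blast+
  show False
  proof (cases "(a,b) \<in> E")
    case True
    from r2 show False
    proof (cases rule: rtranclE)
      case base then show False using ab by simp
    next
      case (step z)
      then show False using arc_target_nonedge[OF bg] True by blast
    qed
  next
    case False
    from tot[OF ab False] show False
    proof
      assume "(a,b) \<in> P"
      moreover have "(b,a) \<in> P" using closed_rtrancl[OF r1 \<open>(a,b) \<in> P\<close>] cl by blast
      ultimately show False using asy by blast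
    next
      assume "(b,a) \<in> P"
      moreover have "(a,b) \<in> P" using closed_rtrancl[OF r2 \<open>(b,a) \<in> P\<close>] cl by blast
      ultimately show False using asy by blast
    qed
  qed
qed

lemma no_good:
  assumes bg: "bigraph V B E" and g: "good_ordering V B E r"
    and sc: "strong_component (pair_vertices V) (pair_arcs V B E) S" "self_coupled S"
  shows False
proof -
  have symE: "sym E" using bg unfolding bigraph_def by blast
  have rV: "r \<subseteq> V \<times> V" and tr: "trans r" and ir: "irrefl r" and tot: "total_on V r"
    using g unfolding good_ordering_def strict_linear_order_on_def by blast+
  have nopat: "\<not> (\<exists>a\<in>V. \<exists>b\<in>V. \<exists>c\<in>V. (a, b) \<in> r \<and> (b, c) \<in> r \<and> same_colour B a b \<and>
          \<not> same_colour B a c \<and> (a, c) \<in> E \<and> (b, c) \<notin> E)"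
    using g unfolding good_ordering_def by blast
  have totr: "\<And>x y. x \<in> V \<Longrightarrow> y \<in> V \<Longrightarrow> x \<noteq> y \<Longrightarrow> (x,y) \<in> r \<or> (y,x) \<in> r"
    using tot unfolding total_on_def by blast
  let ?P = "{(u,v). (u,v) \<in> r \<and> (u,v) \<notin> E}"
  show False
  proof (rule general[OF bg _ _ _ sc, of ?P])
    fix a b assume ab: "(a,b) \<in> pair_arcs V B E" and aP: "a \<in> ?P"
    obtain u0 v0 where a: "a = (u0,v0)" by (cases a)
    obtain u1 v1 where b: "b = (u1,v1)" by (cases b)
    have ne: "(u1,v1) \<notin> E" using arc_target_nonedge[OF bg] ab b by blast
    have r0: "(u0,v0) \<in> r" "(u0,v0) \<notin> E" using aP a by auto
    from arc_cases[OF ab[unfolded a b]] show "b \<in> ?P"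
    proof
      assume h: "v1 = v0 \<and> u0 \<in> V \<and> v0 \<in> V \<and> u1 \<in> V \<and> u0 \<noteq> v0 \<and> u1 \<noteq> v0 \<and>
           same_colour B u0 v0 \<and> (u0,u1) \<in> E \<and> (v0,u1) \<notin> E"
      have "\<not> same_colour B u0 u1" using edge_colour[OF bg] h by blast
      then have "(v0,u1) \<notin> r" using nopat h r0 by blast
      then have "(u1,v0) \<in> r" using totr h by blast
      then show ?thesis using h ne b by auto
    next
      assume h: "u1 = u0 \<and> u0 \<in> V \<and> v0 \<in> V \<and> v1 \<in> V \<and> u0 \<noteq> v0 \<and> u0 \<noteq> v1 \<and>
           \<not> same_colour B u0 v0 \<and> (v0,v1) \<in> E \<and> (u0,v1) \<notin> E"
      have c1: "\<not> same_colour B v1 v0" using edge_colour[OF bg] h symE by (blast dest: symD)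
      have c2: "same_colour B v1 u0" using c1 h unfolding same_colour_def by blast
      have e: "(v1,v0) \<in> E" using h symE by (blast dest: symD)
      have "(v1,u0) \<notin> r" using nopat h r0 c1 c2 e by blast
      then have "(u0,v1) \<in> r" using totr h by blast
      then show ?thesis using h ne b by auto
    qed
  next
    fix u v assume "u \<in> V" "v \<in> V" "u \<noteq> v" "(u,v) \<notin> E"
    moreover have "(v,u) \<notin> E" using \<open>(u,v) \<notin> E\<close> symE by (blast dest: symD)
    ultimately show "(u,v) \<in> ?P \<or> (v,u) \<in> ?P" using totr by blast
  next
    fix u v assume "(u,v) \<in> ?P"
    then show "(v,u) \<notin> ?P" using tr ir unfolding irrefl_def by (blast dest: transD)
  qed
qed

lemma int_meet:
  fixes a b c d :: real
  assumes "a \<le> b" "c \<le> d"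
  shows "{a..b} \<inter> {c..d} \<noteq> {} \<longleftrightarrow> a \<le> d \<and> c \<le> b"
proof
  assume "{a..b} \<inter> {c..d} \<noteq> {}"
  then show "a \<le> d \<and> c \<le> b" by auto
next
  assume h: "a \<le> d \<and> c \<le> b"
  have "max a c \<in> {a..b} \<inter> {c..d}" using h assms by (auto simp: max_def)
  then show "{a..b} \<inter> {c..d} \<noteq> {}" by blast
qed

lemma no_interval:
  assumes bg: "bigraph V B E" and ib: "interval_bigraph V B E"
    and sc: "strong_component (pair_vertices V) (pair_arcs V B E) S" "self_coupled S"
  shows False
proof -
  have symE: "sym E" and finV: "finite V" using bg unfolding bigraph_def by blast+
  obtain I :: "'a \<Rightarrow> real \<times> real" where Iv: "\<forall>v\<in>V. fst (I v) \<le> snd (I v)"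
    and Ie: "\<forall>x\<in>B. \<forall>y\<in>V - B. (x, y) \<in> E \<longleftrightarrow> {fst (I x)..snd (I x)} \<inter> {fst (I y)..snd (I y)} \<noteq> {}"
    using ib unfolding interval_bigraph_def by blast
  obtain f :: "'a \<Rightarrow> nat" where inj: "inj_on f V"
    using finite_imp_inj_to_nat_seg[OF finV] by blast
  define L where "L v = fst (I v)" for v
  define R where "R v = snd (I v)" for v
  have LR: "\<And>v. v \<in> V \<Longrightarrow> L v \<le> R v" using Iv unfolding L_def R_def by blast
  have BV: "B \<subseteq> V" using bg unfolding bigraph_def by blast
  have edge: "\<And>x y. x \<in> V \<Longrightarrow> y \<in> V \<Longrightarrow> \<not> same_colour B x y \<Longrightarrow>
      (x,y) \<in> E \<longleftrightarrow> L x \<le> R y \<and> L y \<le> R x"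
  proof -
    fix x y assume xy: "x \<in> V" "y \<in> V" "\<not> same_colour B x y"
    show "(x,y) \<in> E \<longleftrightarrow> L x \<le> R y \<and> L y \<le> R x"
    proof (cases "x \<in> B")
      case True
      then have "y \<in> V - B" using xy unfolding same_colour_def by blast
      then show ?thesis using Ie True int_meet[OF LR[OF xy(1)] LR[OF xy(2)]]
        unfolding L_def R_def by blast
    next
      case False
      then have yB: "y \<in> B" "x \<in> V - B" using xy unfolding same_colour_def by blast+
      have "(x,y) \<in> E \<longleftrightarrow> (y,x) \<in> E" using symE by (blast dest: symD)
      then show ?thesis using Ie yB int_meet[OF LR[OF xy(2)] LR[OF xy(1)]]
        unfolding L_def R_def by blast
    qed
  qed
  define Q where "Q u v = (R u < R v \<or> (R u = R v \<and> f u < f v))" for u v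
  let ?P = "{(u,v). u \<in> V \<and> v \<in> V \<and> (u,v) \<notin> E \<and>
       (if same_colour B u v then Q u v else R u < L v)}"
  show False
  proof (rule general[OF bg _ _ _ sc, of ?P])
    fix a b assume ab: "(a,b) \<in> pair_arcs V B E" and aP: "a \<in> ?P"
    obtain u0 v0 where a: "a = (u0,v0)" by (cases a)
    obtain u1 v1 where b: "b = (u1,v1)" by (cases b)
    have ne: "(u1,v1) \<notin> E" using arc_target_nonedge[OF bg] ab b by blast
    from arc_cases[OF ab[unfolded a b]] show "b \<in> ?P"
    proof
      assume h: "v1 = v0 \<and> u0 \<in> V \<and> v0 \<in> V \<and> u1 \<in> V \<and> u0 \<noteq> v0 \<and> u1 \<noteq> v0 \<and>
           same_colour B u0 v0 \<and> (u0,u1) \<in> E \<and> (v0,u1) \<notin> E"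
      have q: "Q u0 v0" using aP a h by auto
      have c1: "\<not> same_colour B u0 u1" using edge_colour[OF bg] h by blast
      have c2: "\<not> same_colour B v0 u1" "\<not> same_colour B u1 v0"
        using c1 h unfolding same_colour_def by blast+
      have e1: "L u1 \<le> R u0" using edge[of u0 u1] h c1 by blast
      have e2: "\<not> (L v0 \<le> R u1 \<and> L u1 \<le> R v0)" using edge[of v0 u1] h c2 by blast
      have "R u0 \<le> R v0" using q unfolding Q_def by linarith
      then have "R u1 < L v0" using e1 e2 by linarith
      then show ?thesis using h ne b c2 by auto
    next
      assume h: "u1 = u0 \<and> u0 \<in> V \<and> v0 \<in> V \<and> v1 \<in> V \<and> u0 \<noteq> v0 \<and> u0 \<noteq> v1 \<and>
           \<not> same_colour B u0 v0 \<and> (v0,v1) \<in> E \<and> (u0,v1) \<notin> E"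
      have q: "R u0 < L v0" using aP a h by auto
      have c1: "\<not> same_colour B v0 v1" using edge_colour[OF bg] h by blast
      have c2: "same_colour B u0 v1" using c1 h unfolding same_colour_def by blast
      have "L v0 \<le> R v1" using edge[of v0 v1] h c1 by blast
      then have "Q u0 v1" using q unfolding Q_def by linarith
      then show ?thesis using h ne b c2 by auto
    qed
  next
    fix u v assume uv: "u \<in> V" "v \<in> V" "u \<noteq> v" "(u,v) \<notin> E"
    have vu: "(v,u) \<notin> E" using uv(4) symE by (blast dest: symD)
    show "(u,v) \<in> ?P \<or> (v,u) \<in> ?P"
    proof (cases "same_colour B u v")
      case True
      then have sc': "same_colour B v u" unfolding same_colour_def by blast
      have "f u \<noteq> f v" using inj uv unfolding inj_on_def by blast
      then have "Q u v \<or> Q v u" unfolding Q_def by linarith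
      then show ?thesis using uv vu True sc' by auto
    next
      case False
      then have sc': "\<not> same_colour B v u" unfolding same_colour_def by blast
      have "\<not> (L u \<le> R v \<and> L v \<le> R u)" using edge[of u v] uv False by blast
      then have "R u < L v \<or> R v < L u" by linarith
      then show ?thesis using uv vu False sc' by auto
    qed
  next
    fix u v assume uP: "(u,v) \<in> ?P"
    show "(v,u) \<notin> ?P"
    proof
      assume vP: "(v,u) \<in> ?P"
      show False
      proof (cases "same_colour B u v")
        case True
        then have "same_colour B v u" unfolding same_colour_def by blast
        then have "Q u v" "Q v u" using uP vP True by auto
        then show False unfolding Q_def by linarith
      next
        case False
        then have "\<not> same_colour B v u" unfolding same_colour_def by blast
        then have "R u < L v" "R v < L u" using uP vP False by auto
        moreover have "L u \<le> R u" "L v \<le> R v" using uP LR by auto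
        ultimately show False by linarith
      qed
    qed
  qed
qed

theorem lemma2p3:
  fixes V B :: "'a set" and E :: "('a \<times> 'a) set"
  assumes "bigraph V B E"
    and "\<exists>S. strong_component (pair_vertices V) (pair_arcs V B E) S \<and> self_coupled S"
  shows "\<not> interval_bigraph V B E \<and> \<not> (\<exists>r. good_ordering V B E r)"
  using assms no_interval no_good by metis

end
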